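(* Let $V$ be a finite nonempty set and $f:\{0,1\}^V\to\{0,1\}^V$. (1) $f$ is positive-circular if and only if $f$ is even-self-dual and non-expansive. (2) $f$ is negative-circular if and only if $f$ is odd-self-dual and non-expansive.
   Context: For $x,y\in\{0,1\}^V$, $x\oplus y$ is componentwise addition mod 2, $1$ is the all-ones point, $\|x\|$ is the number of $1$s of $x$, $d(x,y)=\|x\oplus y\|$; $x$ is even (odd) if $\|x\|$ is even (odd). $f$ is non-expansive if $d(f(x),f(y))\le d(x,y)$ for all $x,y$. The conjugate is $\tilde f(x)=f(x)\oplus x$. $f$ is self-dual if $f(x\oplus1)=f(x)\oplus1$ for all $x$; even (odd) if $\tilde f(\{0,1\}^V)$ is exactly the set of even (odd) points; even-self-dual (odd-self-dual) if both even (odd) and self-dual. For $x^{j\alpha}$ the point equal to $x$ except its $j$-component is $\alpha$, the global interaction graph $G(f)$ is the signed digraph on $V$ with a positive (resp. negative) arc from $j$ to $i$ iff $f_i(x^{j1})-f_i(x^{j0})=1$ (resp. $=-1$) for at least one $x$ (so there may be both a positive and a negative arc from $j$ to $i$; loops allowed). A cycle is a subgraph with at most one arc between any ordered pair of vertices whose underlying unsigned digraph is a directed cycle; it is positive (negative) if it has an even (odd) number of negative arcs. $f$ is positive-circular (negative-circular) if $G(f)$ itself is a positive (negative) cycle (passing through all vertices of $V$). *)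

theory Defs
  imports Main
begin

text \<open>Points of {0,1}^V are functions V => bool, with V a finite type (nonempty automatically).\<close>

definition bxor :: "('v \<Rightarrow> bool) \<Rightarrow> ('v \<Rightarrow> bool) \<Rightarrow> ('v \<Rightarrow> bool)" where
  "bxor x y = (\<lambda>i. x i \<noteq> y i)"

definition ones :: "'v \<Rightarrow> bool" where
  "ones = (\<lambda>i. True)"

definition wt :: "('v::finite \<Rightarrow> bool) \<Rightarrow> nat" where
  "wt x = card {i. x i}"

definition hdist :: "('v::finite \<Rightarrow> bool) \<Rightarrow> ('v \<Rightarrow> bool) \<Rightarrow> nat" where
  "hdist x y = wt (bxor x y)"

definition non_expansive :: "(('v::finite \<Rightarrow> bool) \<Rightarrow> ('v \<Rightarrow> bool)) \<Rightarrow> bool" where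
  "non_expansive f \<longleftrightarrow> (\<forall>x y. hdist (f x) (f y) \<le> hdist x y)"

definition conjugate :: "(('v \<Rightarrow> bool) \<Rightarrow> ('v \<Rightarrow> bool)) \<Rightarrow> ('v \<Rightarrow> bool) \<Rightarrow> ('v \<Rightarrow> bool)" where
  "conjugate f x = bxor (f x) x"

definition self_dual :: "(('v \<Rightarrow> bool) \<Rightarrow> ('v \<Rightarrow> bool)) \<Rightarrow> bool" where
  "self_dual f \<longleftrightarrow> (\<forall>x. f (bxor x ones) = bxor (f x) ones)"

definition even_map :: "(('v::finite \<Rightarrow> bool) \<Rightarrow> ('v \<Rightarrow> bool)) \<Rightarrow> bool" where
  "even_map f \<longleftrightarrow> range (conjugate f) = {x. even (wt x)}"

definition odd_map :: "(('v::finite \<Rightarrow> bool) \<Rightarrow> ('v \<Rightarrow> bool)) \<Rightarrow> bool" where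
  "odd_map f \<longleftrightarrow> range (conjugate f) = {x. odd (wt x)}"

definition even_self_dual :: "(('v::finite \<Rightarrow> bool) \<Rightarrow> ('v \<Rightarrow> bool)) \<Rightarrow> bool" where
  "even_self_dual f \<longleftrightarrow> even_map f \<and> self_dual f"

definition odd_self_dual :: "(('v::finite \<Rightarrow> bool) \<Rightarrow> ('v \<Rightarrow> bool)) \<Rightarrow> bool" where
  "odd_self_dual f \<longleftrightarrow> odd_map f \<and> self_dual f"

text \<open>Global interaction graph: set of signed arcs (j, i, s), s = True positive, s = False negative.
  f_i(x^{j1}) - f_i(x^{j0}) = 1 means f_i(x^{j1}) true and f_i(x^{j0}) false.\<close>

definition interaction_graph :: "(('v \<Rightarrow> bool) \<Rightarrow> ('v \<Rightarrow> bool)) \<Rightarrow> ('v \<times> 'v \<times> bool) set" where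
  "interaction_graph f =
     {(j, i, True) | j i. \<exists>x. f (x(j := True)) i \<and> \<not> f (x(j := False)) i} \<union>
     {(j, i, False) | j i. \<exists>x. \<not> f (x(j := True)) i \<and> f (x(j := False)) i}"

text \<open>A signed arc set is a cycle through all vertices: at most one arc per ordered pair and the
  underlying unsigned digraph is a directed cycle visiting every vertex (a loop if |V| = 1).\<close>

definition hamiltonian_signed_cycle :: "('v \<times> 'v \<times> bool) set \<Rightarrow> bool" where
  "hamiltonian_signed_cycle A \<longleftrightarrow>
     (\<forall>j i. \<not> ((j, i, True) \<in> A \<and> (j, i, False) \<in> A)) \<and>
     (\<exists>vs. distinct vs \<and> set vs = UNIV \<and>
        {(j, i). \<exists>s. (j, i, s) \<in> A} = {(vs ! k, vs ! (Suc k mod length vs)) | k. k < length vs})"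

definition negative_arcs :: "('v \<times> 'v \<times> bool) set \<Rightarrow> ('v \<times> 'v) set" where
  "negative_arcs A = {(j, i). (j, i, False) \<in> A}"

definition positive_circular :: "(('v::finite \<Rightarrow> bool) \<Rightarrow> ('v \<Rightarrow> bool)) \<Rightarrow> bool" where
  "positive_circular f \<longleftrightarrow> hamiltonian_signed_cycle (interaction_graph f) \<and>
     even (card (negative_arcs (interaction_graph f)))"

definition negative_circular :: "(('v::finite \<Rightarrow> bool) \<Rightarrow> ('v \<Rightarrow> bool)) \<Rightarrow> bool" where
  "negative_circular f \<longleftrightarrow> hamiltonian_signed_cycle (interaction_graph f) \<and>
     odd (card (negative_arcs (interaction_graph f)))"

end

theory Submission
  imports Defs "HOL-Combinatorics.Orbits" "HOL-Combinatorics.Permutations"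
begin

lemma hdist_alt: "hdist x y = card {i. x i \<noteq> y i}"
  by (simp add: hdist_def wt_def bxor_def)

lemma hdist_sym: "hdist x y = hdist y x"
  unfolding hdist_alt by metis

lemma hdist_tri: "hdist (x::'v::finite \<Rightarrow> bool) z \<le> hdist x y + hdist y z"
proof -
  have "{i. x i \<noteq> z i} \<subseteq> {i. x i \<noteq> y i} \<union> {i. y i \<noteq> z i}" by auto
  hence "card {i. x i \<noteq> z i} \<le> card ({i. x i \<noteq> y i} \<union> {i. y i \<noteq> z i})"
    by (intro card_mono) auto
  also have "\<dots> \<le> card {i. x i \<noteq> y i} + card {i. y i \<noteq> z i}" by (rule card_Un_le)
  finally show ?thesis unfolding hdist_alt .
qed

lemma hdist_le: "hdist (x::'v::finite \<Rightarrow> bool) y \<le> card (UNIV :: 'v set)"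
  unfolding hdist_alt by (intro card_mono) auto

lemma hdist_compl: "hdist (x::'v::finite \<Rightarrow> bool) (bxor y ones) = card (UNIV :: 'v set) - hdist x y"
proof -
  have "{i. x i \<noteq> bxor y ones i} = UNIV - {i. x i \<noteq> y i}"
    by (auto simp: bxor_def ones_def)
  thus ?thesis unfolding hdist_alt by (simp add: card_Diff_subset)
qed

lemma hdist_self: "hdist x x = 0"
  unfolding hdist_alt by simp

lemma hdist_flip:
  fixes a b :: "'v::finite \<Rightarrow> bool"
  shows "if a k = b k then hdist a (b(k := \<not> b k)) = hdist a b + 1
         else hdist a (b(k := \<not> b k)) + 1 = hdist a b"
proof (cases "a k = b k")
  case True
  have "{i. a i \<noteq> (b(k := \<not> b k)) i} = insert k {i. a i \<noteq> b i}"
    using True by auto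
  moreover have "k \<notin> {i. a i \<noteq> b i}" using True by auto
  ultimately show ?thesis using True unfolding hdist_alt by simp
next
  case False
  have "{i. a i \<noteq> b i} = insert k {i. a i \<noteq> (b(k := \<not> b k)) i}"
    using False by auto
  moreover have "k \<notin> {i. a i \<noteq> (b(k := \<not> b k)) i}" using False by auto
  ultimately show ?thesis using False unfolding hdist_alt by simp
qed

lemma isometry:
  fixes f :: "('v::finite \<Rightarrow> bool) \<Rightarrow> ('v \<Rightarrow> bool)"
  assumes sd: "self_dual f" and ne: "non_expansive f"
  shows "hdist (f x) (f y) = hdist x y"
proof -
  let ?N = "card (UNIV :: 'v set)"
  have 1: "hdist (f x) (f y) \<le> hdist x y" using ne by (simp add: non_expansive_def)
  have 2: "hdist (f y) (f (bxor x ones)) \<le> hdist y (bxor x ones)"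
    using ne by (simp add: non_expansive_def)
  have 3: "hdist y (bxor x ones) = ?N - hdist x y"
    by (simp add: hdist_compl hdist_sym)
  have 4: "hdist (f x) (f (bxor x ones)) = ?N"
    using sd by (simp add: self_dual_def hdist_compl hdist_self)
  have 5: "hdist (f x) (f (bxor x ones)) \<le> hdist (f x) (f y) + hdist (f y) (f (bxor x ones))"
    by (rule hdist_tri)
  have 6: "hdist x y \<le> ?N" by (rule hdist_le)
  from 1 2 3 4 5 6 show ?thesis by linarith
qed

definition nf :: "('v \<Rightarrow> 'v) \<Rightarrow> ('v \<Rightarrow> bool) \<Rightarrow> ('v \<Rightarrow> bool) \<Rightarrow> ('v \<Rightarrow> bool)" where
  "nf p c = (\<lambda>x i. x (p i) \<noteq> c i)"

lemma iso_nf: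
  fixes f :: "('v::finite \<Rightarrow> bool) \<Rightarrow> ('v \<Rightarrow> bool)"
  assumes iso: "\<And>x y. hdist (f x) (f y) = hdist x y"
  shows "\<exists>p c. bij p \<and> f = nf p c"
proof -
  define c where "c = f (\<lambda>_. False)"
  define e where "e = (\<lambda>j::'v. (\<lambda>_. False)(j := True))"
  have "\<forall>j. \<exists>k. {i. f (e j) i \<noteq> c i} = {k}"
  proof
    fix j
    have "hdist (f (e j)) c = hdist (e j) (\<lambda>_. False)" unfolding c_def by (rule iso)
    also have "\<dots> = 1" unfolding hdist_alt e_def by simp
    finally have "card {i. f (e j) i \<noteq> c i} = 1" unfolding hdist_alt .
    thus "\<exists>k. {i. f (e j) i \<noteq> c i} = {k}" by (rule card_1_singletonE) blast
  qed
  then obtain \<sigma> where sig: "\<And>j. {i. f (e j) i \<noteq> c i} = {\<sigma> j}" by metis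
  have fe: "f (e j) = c(\<sigma> j := \<not> c (\<sigma> j))" for j
  proof
    fix i
    from sig[of j] have "f (e j) i \<noteq> c i \<longleftrightarrow> i = \<sigma> j" by blast
    thus "f (e j) i = (c(\<sigma> j := \<not> c (\<sigma> j))) i" by auto
  qed
  have key: "(f x (\<sigma> j) \<noteq> c (\<sigma> j)) = x j" for x j
  proof -
    have a: "hdist (f x) (c(\<sigma> j := \<not> c (\<sigma> j))) = hdist x ((\<lambda>_. False)(j := \<not> False))"
      using iso[of x "e j"] unfolding fe by (simp add: e_def)
    have b: "hdist (f x) c = hdist x (\<lambda>_. False)" unfolding c_def by (rule iso)
    note h1 = hdist_flip[of "f x" "\<sigma> j" c]
    note h2 = hdist_flip[of x j "\<lambda>_. False"]
    show ?thesis
      using a b h1 h2 by (auto split: if_splits)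
  qed
  have "inj \<sigma>"
  proof (rule injI)
    fix j j' assume "\<sigma> j = \<sigma> j'"
    have "e j j" by (simp add: e_def)
    hence "f (e j) (\<sigma> j) \<noteq> c (\<sigma> j)" using key by blast
    hence "e j j'" using key[of "e j" j'] \<open>\<sigma> j = \<sigma> j'\<close> by simp
    thus "j = j'" by (simp add: e_def split: if_splits)
  qed
  hence "bij \<sigma>" using finite_UNIV_inj_surj[of \<sigma>] by (simp add: bij_def)
  define p where "p = inv \<sigma>"
  have bp: "bij p" unfolding p_def using \<open>bij \<sigma>\<close> by (rule bij_imp_bij_inv)
  have sp: "\<sigma> (p i) = i" for i unfolding p_def using \<open>bij \<sigma>\<close> by (simp add: bij_is_surj surj_f_inv_f)
  have "f = nf p c"
  proof (intro ext)
    fix x i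
    show "f x i = nf p c x i" using key[of x "p i"] by (auto simp: nf_def sp)
  qed
  with bp show ?thesis by blast
qed

lemma ig_simps:
  "(j, i, True) \<in> interaction_graph f \<longleftrightarrow> (\<exists>x. f (x(j := True)) i \<and> \<not> f (x(j := False)) i)"
  "(j, i, False) \<in> interaction_graph f \<longleftrightarrow> (\<exists>x. \<not> f (x(j := True)) i \<and> f (x(j := False)) i)"
  by (auto simp: interaction_graph_def)

lemma U_iff:
  "(\<exists>s. (j, i, s) \<in> interaction_graph f) \<longleftrightarrow> (\<exists>x. f (x(j := True)) i \<noteq> f (x(j := False)) i)"
proof
  assume "\<exists>s. (j, i, s) \<in> interaction_graph f"
  then obtain s where "(j, i, s) \<in> interaction_graph f" by blast
  thus "\<exists>x. f (x(j := True)) i \<noteq> f (x(j := False)) i" by (cases s) (auto simp: ig_simps)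
next
  assume "\<exists>x. f (x(j := True)) i \<noteq> f (x(j := False)) i"
  then obtain x where x: "f (x(j := True)) i \<noteq> f (x(j := False)) i" by blast
  show "\<exists>s. (j, i, s) \<in> interaction_graph f"
  proof (cases "f (x(j := True)) i")
    case True
    hence "(j, i, True) \<in> interaction_graph f" unfolding ig_simps using x by blast
    thus ?thesis by blast
  next
    case False
    hence "(j, i, False) \<in> interaction_graph f" unfolding ig_simps using x by blast
    thus ?thesis by blast
  qed
qed

definition Rc :: "'v list \<Rightarrow> ('v \<times> 'v) set" where
  "Rc vs = {(vs ! k, vs ! (Suc k mod length vs)) | k. k < length vs}"

lemma Rc_mem: "(a, b) \<in> Rc vs \<longleftrightarrow> (\<exists>k<length vs. a = vs ! k \<and> b = vs ! (Suc k mod length vs))"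
  unfolding Rc_def by blast

lemma mod_arith1: "k < (n::nat) \<Longrightarrow> Suc ((k + n - 1) mod n) mod n = k"
  by (cases k) (auto simp: mod_Suc)

lemma mod_arith2: "k < (n::nat) \<Longrightarrow> k' < n \<Longrightarrow> Suc k mod n = Suc k' mod n \<Longrightarrow> k = k'"
  by (auto simp: mod_Suc split: if_splits)

lemma cycle_pred:
  fixes vs :: "'v::finite list"
  assumes d: "distinct vs" and s: "set vs = UNIV"
  shows "\<exists>p. bij p \<and> Rc vs = {(j, i). j = p i}"
proof -
  let ?n = "length vs"
  have ex: "\<exists>j. (j, i) \<in> Rc vs" for i
  proof -
    have "i \<in> set vs" using s by simp
    then obtain m where m: "m < ?n" "i = vs ! m" by (auto simp: in_set_conv_nth)
    define k where "k = (m + ?n - 1) mod ?n"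
    have "0 < ?n" using m(1) by linarith
    hence "k < ?n" unfolding k_def by simp
    moreover have "Suc k mod ?n = m" unfolding k_def by (rule mod_arith1[OF m(1)])
    ultimately have "(vs ! k, vs ! m) \<in> Rc vs" unfolding Rc_mem by blast
    thus ?thesis using m(2) by blast
  qed
  have un1: "j = j'" if "(j, i) \<in> Rc vs" "(j', i) \<in> Rc vs" for i j j'
  proof -
    from that(1) obtain k where k: "k < ?n" "j = vs ! k" "i = vs ! (Suc k mod ?n)"
      unfolding Rc_mem by blast
    from that(2) obtain k' where k': "k' < ?n" "j' = vs ! k'" "i = vs ! (Suc k' mod ?n)"
      unfolding Rc_mem by blast
    have "?n > 0" using k(1) by linarith
    hence l1: "Suc k mod ?n < ?n" "Suc k' mod ?n < ?n" by simp_all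
    have "vs ! (Suc k mod ?n) = vs ! (Suc k' mod ?n)" using k(3) k'(3) by simp
    hence "Suc k mod ?n = Suc k' mod ?n" using nth_eq_iff_index_eq[OF d l1] by blast
    hence "k = k'" using mod_arith2[OF k(1) k'(1)] by blast
    thus ?thesis using k(2) k'(2) by simp
  qed
  have un2: "i = i'" if "(j, i) \<in> Rc vs" "(j, i') \<in> Rc vs" for i i' j
  proof -
    from that(1) obtain k where k: "k < ?n" "j = vs ! k" "i = vs ! (Suc k mod ?n)"
      unfolding Rc_mem by blast
    from that(2) obtain k' where k': "k' < ?n" "j = vs ! k'" "i' = vs ! (Suc k' mod ?n)"
      unfolding Rc_mem by blast
    have "vs ! k = vs ! k'" using k(2) k'(2) by simp
    hence "k = k'" using nth_eq_iff_index_eq[OF d k(1) k'(1)] by blast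
    thus ?thesis using k(3) k'(3) by simp
  qed
  define p where "p i = (THE j. (j, i) \<in> Rc vs)" for i
  have pin: "(p i, i) \<in> Rc vs" for i
  proof -
    obtain j where j: "(j, i) \<in> Rc vs" using ex by blast
    have "\<exists>!j. (j, i) \<in> Rc vs"
    proof (rule ex1I[of _ j])
      show "(j, i) \<in> Rc vs" by (rule j)
    next
      fix j' assume "(j', i) \<in> Rc vs"
      thus "j' = j" using j by (rule un1)
    qed
    thus ?thesis unfolding p_def by (rule theI')
  qed
  have R: "Rc vs = {(j, i). j = p i}"
  proof (intro set_eqI iffI)
    fix z assume "z \<in> Rc vs"
    moreover obtain j i where "z = (j, i)" by (cases z)
    ultimately show "z \<in> {(j, i). j = p i}" using un1[OF _ pin] by simp
  next
    fix z assume "z \<in> {(j, i). j = p i}"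
    thus "z \<in> Rc vs" using pin by auto
  qed
  have "inj p"
  proof (rule injI)
    fix a b assume "p a = p b"
    thus "a = b" using un2[OF pin[of a]] pin[of b] by simp
  qed
  hence "bij p" using finite_UNIV_inj_surj[of p] by (simp add: bij_def)
  with R show ?thesis by blast
qed

lemma dep:
  fixes g :: "('v::finite \<Rightarrow> bool) \<Rightarrow> bool"
  assumes h: "\<And>x k b. k \<noteq> j \<Longrightarrow> g (x(k := b)) = g x"
    and xy: "x j = y j"
  shows "g x = g y"
proof -
  have main: "finite F \<Longrightarrow> (\<forall>x. x j = y j \<longrightarrow> g (\<lambda>k. if k \<in> F then y k else x k) = g x)" for F
  proof (induction F rule: finite_induct)
    case empty thus ?case by simp
  next
    case (insert a F)
    show ?case
    proof (intro allI impI)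
      fix x assume xj: "x j = y j"
      have eq: "(\<lambda>k. if k \<in> insert a F then y k else x k) =
            (\<lambda>k. if k \<in> F then y k else x k)(a := y a)" by (rule ext) auto
      have IH: "g (\<lambda>k. if k \<in> F then y k else x k) = g x" using insert.IH xj by blast
      show "g (\<lambda>k. if k \<in> insert a F then y k else x k) = g x"
      proof (cases "a = j")
        case True
        have "(\<lambda>k. if k \<in> insert a F then y k else x k) = (\<lambda>k. if k \<in> F then y k else x k)"
          using True xj by (intro ext) auto
        thus ?thesis using IH by simp
      next
        case False
        have "g ((\<lambda>k. if k \<in> F then y k else x k)(a := y a)) = g (\<lambda>k. if k \<in> F then y k else x k)"
          by (rule h[OF False])
        thus ?thesis unfolding eq using IH by simp
      qed
    qed
  qed
  have "g (\<lambda>k. if k \<in> UNIV then y k else x k) = g x" using main[of UNIV] finite_UNIV xy by blast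
  moreover have "(\<lambda>k. if k \<in> UNIV then y k else x k) = y" by simp
  ultimately show ?thesis by simp
qed

lemma ham_nf:
  fixes f :: "('v::finite \<Rightarrow> bool) \<Rightarrow> ('v \<Rightarrow> bool)"
  assumes "hamiltonian_signed_cycle (interaction_graph f)"
  shows "\<exists>p c. bij p \<and> f = nf p c"
proof -
  from assms obtain vs where d: "distinct vs" and s: "set vs = UNIV"
    and U: "{(j, i). \<exists>s. (j, i, s) \<in> interaction_graph f} = Rc vs"
    unfolding hamiltonian_signed_cycle_def Rc_def by blast
  from cycle_pred[OF d s] obtain p where bp: "bij p" and R: "Rc vs = {(j, i). j = p i}" by blast
  have Ui: "(\<exists>x. f (x(j := True)) i \<noteq> f (x(j := False)) i) \<longleftrightarrow> j = p i" for j i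
  proof -
    have "(j, i) \<in> {(j, i). \<exists>s. (j, i, s) \<in> interaction_graph f} \<longleftrightarrow> j = p i"
      using U R by simp
    thus ?thesis using U_iff[of j i f] by simp
  qed
  define c where "c = f (\<lambda>_. False)"
  have h: "f (x(k := b)) i = f x i" if "k \<noteq> p i" for x k b i
  proof -
    have e: "\<And>x. f (x(k := True)) i = f (x(k := False)) i" using Ui[of k i] that by blast
    have "f (x(k := b)) i = f (x(k := False)) i" using e[of x] by (cases b) auto
    moreover have "f x i = f (x(k := False)) i"
    proof (cases "x k")
      case True
      hence "x = x(k := True)" by (auto simp: fun_eq_iff)
      hence "f x i = f (x(k := True)) i" by simp
      thus ?thesis using e[of x] by simp
    next
      case False
      hence "x = x(k := False)" by (auto simp: fun_eq_iff)
      thus ?thesis by simp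
    qed
    ultimately show ?thesis by simp
  qed
  have "f = nf p c"
  proof (intro ext)
    fix x i
    have D: "\<And>x y. x (p i) = y (p i) \<Longrightarrow> f x i = f y i"
      by (rule dep[where g = "\<lambda>x. f x i" and j = "p i"]) (rule h, assumption+)
    obtain x0 where x0: "f (x0(p i := True)) i \<noteq> f (x0(p i := False)) i" using Ui[of "p i" i] by blast
    have "f (x0(p i := False)) i = c i" unfolding c_def by (rule D) simp
    moreover have "f (x0(p i := True)) i = f ((\<lambda>_. False)(p i := True)) i" by (rule D) simp
    ultimately have ne: "f ((\<lambda>_. False)(p i := True)) i \<noteq> c i" using x0 by simp
    show "f x i = nf p c x i"
    proof (cases "x (p i)")
      case True
      hence "f x i = f ((\<lambda>_. False)(p i := True)) i" by (intro D) simp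
      thus ?thesis using ne True by (auto simp: nf_def)
    next
      case False
      hence "f x i = c i" unfolding c_def by (intro D) simp
      thus ?thesis using False by (simp add: nf_def)
    qed
  qed
  with bp show ?thesis by blast
qed

definition cyc :: "('v \<Rightarrow> 'v) \<Rightarrow> bool" where
  "cyc p \<longleftrightarrow> (\<exists>vs. distinct vs \<and> set vs = UNIV \<and> {(j, i). j = p i} = Rc vs)"

definition conn :: "('v \<Rightarrow> 'v) \<Rightarrow> bool" where
  "conn p \<longleftrightarrow> (\<forall>d. (\<forall>i. d (p i) = d i) \<longrightarrow> d = (\<lambda>_. False) \<or> d = (\<lambda>_. True))"

lemma ig_nf: "(j, i, s) \<in> interaction_graph (nf p c) \<longleftrightarrow> j = p i \<and> s = (\<not> c i)"
  by (cases s) (auto simp: ig_simps nf_def)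

lemma ham_nf_iff: "hamiltonian_signed_cycle (interaction_graph (nf p c)) \<longleftrightarrow> cyc p"
proof -
  have "{(j, i). \<exists>s. (j, i, s) \<in> interaction_graph (nf p c)} = {(j, i). j = p i}"
    by (auto simp: ig_nf)
  moreover have "\<forall>j i. \<not> ((j, i, True) \<in> interaction_graph (nf p c) \<and> (j, i, False) \<in> interaction_graph (nf p c))"
    by (auto simp: ig_nf)
  ultimately show ?thesis unfolding hamiltonian_signed_cycle_def cyc_def Rc_def by simp
qed

lemma neg_nf: "card (negative_arcs (interaction_graph (nf p c))) = wt c"
proof -
  have "negative_arcs (interaction_graph (nf p c)) = (\<lambda>i. (p i, i)) ` {i. c i}"
    by (auto simp: negative_arcs_def ig_nf)
  moreover have "inj_on (\<lambda>i. (p i, i)) {i. c i}" by (auto intro: inj_onI)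
  ultimately show ?thesis by (simp add: card_image wt_def)
qed

lemma nf_sd: "self_dual (nf p c)"
  by (simp add: self_dual_def nf_def bxor_def ones_def fun_eq_iff)

lemma card_comp:
  fixes p :: "'v::finite \<Rightarrow> 'v"
  assumes "bij p"
  shows "card {i. P (p i)} = card {k. P k}"
proof -
  have "{i. P (p i)} = p -` {k. P k}" by auto
  moreover have "card (p -` {k. P k}) = card {k. P k}"
    using assms by (intro card_vimage_inj) (auto simp: bij_def)
  ultimately show ?thesis by simp
qed

lemma nf_ne:
  fixes p :: "'v::finite \<Rightarrow> 'v"
  assumes "bij p"
  shows "non_expansive (nf p c)"
proof -
  have "hdist (nf p c x) (nf p c y) = hdist x y" for x y
  proof -
    have "hdist (nf p c x) (nf p c y) = card {i. x (p i) \<noteq> y (p i)}"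
      unfolding hdist_alt nf_def by (rule arg_cong[where f = card]) auto
    also have "\<dots> = hdist x y" unfolding hdist_alt
      using card_comp[OF assms, of "\<lambda>k. x k \<noteq> y k"] by simp
    finally show ?thesis .
  qed
  thus ?thesis by (simp add: non_expansive_def)
qed

lemma par_bxor:
  fixes a b :: "'v::finite \<Rightarrow> bool"
  shows "even (wt (bxor a b)) \<longleftrightarrow> (even (wt a) \<longleftrightarrow> even (wt b))"
proof -
  let ?A = "{i. a i}" and ?B = "{i. b i}"
  have e1: "{i. bxor a b i} = (?A \<union> ?B) - (?A \<inter> ?B)" by (auto simp: bxor_def)
  have e2: "card ?A + card ?B = card (?A \<union> ?B) + card (?A \<inter> ?B)"
    by (rule card_Un_Int) auto
  have e3: "card ((?A \<union> ?B) - (?A \<inter> ?B)) = card (?A \<union> ?B) - card (?A \<inter> ?B)"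
    by (rule card_Diff_subset) auto
  have e4: "card (?A \<inter> ?B) \<le> card (?A \<union> ?B)" by (rule card_mono) auto
  have "wt (bxor a b) + 2 * card (?A \<inter> ?B) = wt a + wt b"
    unfolding wt_def e1 e3 using e2 e4 by linarith
  hence "even (wt (bxor a b)) \<longleftrightarrow> even (wt a + wt b)"
    by (metis even_add even_mult_iff even_numeral)
  thus ?thesis by simp
qed

lemma conj_nf: "conjugate (nf p c) x = bxor (bxor (\<lambda>i. x (p i)) x) c"
  unfolding conjugate_def nf_def bxor_def by (rule ext) blast

lemma par_conj:
  fixes p :: "'v::finite \<Rightarrow> 'v"
  assumes "bij p"
  shows "even (wt (conjugate (nf p c) x)) \<longleftrightarrow> even (wt c)"
proof -
  have "wt (\<lambda>i. x (p i)) = wt x" unfolding wt_def by (rule card_comp[OF assms])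
  thus ?thesis unfolding conj_nf par_bxor by simp
qed

lemma conj0: "conjugate (nf p c) (\<lambda>_. False) = c"
  by (simp add: conjugate_def nf_def bxor_def fun_eq_iff)

lemma fiber: "conjugate (nf p c) x = conjugate (nf p c) y \<longleftrightarrow> (\<forall>i. bxor x y (p i) = bxor x y i)"
  unfolding conjugate_def nf_def bxor_def fun_eq_iff by blast

lemma count_fibers:
  fixes p :: "'v::finite \<Rightarrow> 'v"
  shows "card (UNIV :: ('v \<Rightarrow> bool) set) =
         card (range (conjugate (nf p c))) * card {d :: 'v \<Rightarrow> bool. \<forall>i. d (p i) = d i}"
proof -
  let ?C = "conjugate (nf p c)"
  let ?Inv = "{d :: 'v \<Rightarrow> bool. \<forall>i. d (p i) = d i}"
  let ?A = "\<lambda>z. {x. ?C x = z}"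
  have U: "(UNIV :: ('v \<Rightarrow> bool) set) = (\<Union>z\<in>range ?C. ?A z)" by blast
  have fib: "card (?A z) = card ?Inv" if "z \<in> range ?C" for z
  proof -
    from that obtain x0 where z: "z = ?C x0" by blast
    have "?A z = bxor x0 ` ?Inv"
    proof (intro set_eqI iffI)
      fix y assume "y \<in> ?A z"
      hence "bxor x0 y \<in> ?Inv" using fiber[of p c x0 y] z by simp
      moreover have "y = bxor x0 (bxor x0 y)" unfolding bxor_def by (rule ext) blast
      ultimately show "y \<in> bxor x0 ` ?Inv" by blast
    next
      fix y assume "y \<in> bxor x0 ` ?Inv"
      then obtain d where d: "d \<in> ?Inv" "y = bxor x0 d" by blast
      have "bxor x0 y = d" unfolding d(2) bxor_def by (rule ext) blast
      thus "y \<in> ?A z" using fiber[of p c x0 y] z d(1) by simp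
    qed
    moreover have "inj (bxor x0)"
    proof (rule injI)
      fix u w assume "bxor x0 u = bxor x0 w"
      hence "\<forall>i. (x0 i \<noteq> u i) = (x0 i \<noteq> w i)" unfolding bxor_def by meson
      thus "u = w" by (intro ext) blast
    qed
    ultimately show ?thesis by (simp add: card_image inj_on_subset)
  qed
  have "card (UNIV :: ('v \<Rightarrow> bool) set) = card (\<Union>z\<in>range ?C. ?A z)"
    using U by (rule arg_cong)
  also have "\<dots> = (\<Sum>z\<in>range ?C. card (?A z))"
    by (rule card_UN_disjoint) auto
  also have "\<dots> = (\<Sum>z\<in>range ?C. card ?Inv)" by (rule sum.cong) (auto simp: fib)
  also have "\<dots> = card (range ?C) * card ?Inv" by simp
  finally show ?thesis .
qed

lemma class_card:
  "2 * card {x :: 'v::finite \<Rightarrow> bool. even (wt x) = b} = card (UNIV :: ('v \<Rightarrow> bool) set)"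
proof -
  obtain v0 :: 'v where True by blast
  define e where "e = (\<lambda>i::'v. i = v0)"
  have we: "wt e = 1" unfolding wt_def e_def by simp
  define \<phi> where "\<phi> = (\<lambda>x::'v \<Rightarrow> bool. bxor x e)"
  have pp: "\<phi> (\<phi> x) = x" for x unfolding \<phi>_def bxor_def by (rule ext) blast
  have pw: "even (wt (\<phi> x)) \<longleftrightarrow> \<not> even (wt x)" for x
    unfolding \<phi>_def par_bxor we by simp
  have "bij_betw \<phi> {x::'v\<Rightarrow>bool. even (wt x) = b} {x::'v\<Rightarrow>bool. even (wt x) = (\<not> b)}"
    by (rule bij_betwI[where g = \<phi>]) (auto simp: pp pw)
  hence c1: "card {x::'v\<Rightarrow>bool. even (wt x) = b} = card {x::'v\<Rightarrow>bool. even (wt x) = (\<not> b)}" by (rule bij_betw_same_card)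
  have "(UNIV :: ('v \<Rightarrow> bool) set) = {x::'v\<Rightarrow>bool. even (wt x) = b} \<union> {x::'v\<Rightarrow>bool. even (wt x) = (\<not> b)}" by auto
  hence "card (UNIV :: ('v \<Rightarrow> bool) set) = card {x::'v\<Rightarrow>bool. even (wt x) = b} + card {x::'v\<Rightarrow>bool. even (wt x) = (\<not> b)}"
    by (simp add: card_Un_disjoint[symmetric] disjoint_iff)
  thus ?thesis using c1 by simp
qed

lemma range_class:
  fixes p :: "'v::finite \<Rightarrow> 'v"
  assumes bp: "bij p"
  shows "range (conjugate (nf p c)) = {x. even (wt x) = b} \<longleftrightarrow> conn p \<and> even (wt c) = b"
proof -
  let ?C = "conjugate (nf p c)"
  let ?Inv = "{d :: 'v \<Rightarrow> bool. \<forall>i. d (p i) = d i}"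
  let ?N = "card (UNIV :: ('v \<Rightarrow> bool) set)"
  have sub: "range ?C \<subseteq> {x. even (wt x) = even (wt c)}" using par_conj[OF bp] by auto
  have cin: "c \<in> range ?C" using conj0[of p c] by (metis rangeI)
  have cnt: "?N = card (range ?C) * card ?Inv" by (rule count_fibers)
  have cls: "2 * card {x :: 'v \<Rightarrow> bool. even (wt x) = b} = ?N" by (rule class_card)
  have Npos: "?N > 0" by (simp add: card_gt_0_iff)
  have rpos: "card (range ?C) > 0" using cin by (simp add: card_gt_0_iff)
  show ?thesis
  proof
    assume R: "range ?C = {x. even (wt x) = b}"
    have cb: "even (wt c) = b" using cin R by auto
    have "conn p"
    proof (rule ccontr)
      assume "\<not> conn p"
      then obtain d where d: "\<forall>i. d (p i) = d i" "d \<noteq> (\<lambda>_. False)" "d \<noteq> (\<lambda>_. True)"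
        unfolding conn_def by blast
      have "{\<lambda>_. False, \<lambda>_. True, d} \<subseteq> ?Inv" using d(1) by auto
      hence "card {\<lambda>_::'v. False, \<lambda>_. True, d} \<le> card ?Inv" by (intro card_mono) auto
      moreover have "(\<lambda>_::'v. False) \<noteq> (\<lambda>_. True)" by (simp add: fun_eq_iff)
      ultimately have "3 \<le> card ?Inv" using d(2,3) by simp
      hence "3 * card (range ?C) \<le> ?N" using cnt by simp
      moreover have "2 * card (range ?C) = ?N" using cls R by simp
      ultimately show False using rpos by linarith
    qed
    with cb show "conn p \<and> even (wt c) = b" by blast
  next
    assume H: "conn p \<and> even (wt c) = b"
    have "?Inv = {\<lambda>_. False, \<lambda>_. True}" using H unfolding conn_def by auto
    moreover have "(\<lambda>_::'v. False) \<noteq> (\<lambda>_. True)" by (simp add: fun_eq_iff)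
    ultimately have "card ?Inv = 2" by simp
    hence "card (range ?C) = card {x :: 'v \<Rightarrow> bool. even (wt x) = b}" using cnt cls by simp
    moreover have "range ?C \<subseteq> {x. even (wt x) = b}" using sub H by simp
    ultimately show "range ?C = {x. even (wt x) = b}"
      by (intro card_subset_eq) auto
  qed
qed

lemma cyc_conn:
  fixes p :: "'v::finite \<Rightarrow> 'v"
  assumes "cyc p"
  shows "conn p"
  unfolding conn_def
proof (intro allI impI)
  fix d :: "'v \<Rightarrow> bool" assume d: "\<forall>i. d (p i) = d i"
  from assms obtain vs where dv: "distinct vs" and sv: "set vs = UNIV"
    and R: "{(j, i). j = p i} = Rc vs" unfolding cyc_def by blast
  let ?n = "length vs"
  obtain v0 :: 'v where True by blast
  have "v0 \<in> set vs" using sv by simp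
  hence npos: "0 < ?n" by (cases vs) auto
  have all: "k < ?n \<Longrightarrow> d (vs ! k) = d (vs ! 0)" for k
  proof (induction k)
    case 0 thus ?case by simp
  next
    case (Suc k)
    hence "k < ?n" by simp
    hence "(vs ! k, vs ! (Suc k mod ?n)) \<in> Rc vs" unfolding Rc_mem by blast
    hence "vs ! k = p (vs ! (Suc k mod ?n))" using R by blast
    moreover have "Suc k mod ?n = Suc k" using Suc.prems by simp
    ultimately have "vs ! k = p (vs ! Suc k)" by simp
    hence "d (vs ! Suc k) = d (vs ! k)" using d by metis
    thus ?case using Suc by simp
  qed
  have "d i = d (vs ! 0)" for i
  proof -
    have "i \<in> set vs" using sv by simp
    then obtain k where "k < ?n" "i = vs ! k" by (auto simp: in_set_conv_nth)
    thus ?thesis using all by simp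
  qed
  thus "d = (\<lambda>_. False) \<or> d = (\<lambda>_. True)"
    by (cases "d (vs ! 0)") (auto simp: fun_eq_iff)
qed

lemma conn_cyc:
  fixes p :: "'v::finite \<Rightarrow> 'v"
  assumes bp: "bij p" and cp: "conn p"
  shows "cyc p"
proof -
  define q where "q = inv p"
  have bq: "bij q" unfolding q_def using bp by (rule bij_imp_bij_inv)
  have pq: "p (q y) = y" for y unfolding q_def using bp by (simp add: bij_is_surj surj_f_inv_f)
  have qp: "q (p y) = y" for y unfolding q_def using bp by (simp add: bij_is_inj inv_f_f)
  have iq: "inv q = p" unfolding q_def using bp by (rule inv_inv_eq)
  have perm: "permutation q" using bq by (simp add: permutation)
  obtain v0 :: 'v where True by blast
  let ?O = "orbit q v0"
  have v0O: "v0 \<in> ?O" by (rule permutation_self_in_orbit[OF perm])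
  have Op: "orbit p v0 = ?O" using orbit_inv_eq[OF perm] iq by simp
  have "\<forall>i. (p i \<in> ?O) = (i \<in> ?O)"
  proof
    fix i
    show "(p i \<in> ?O) = (i \<in> ?O)"
    proof
      assume "p i \<in> ?O"
      hence "q (p i) \<in> ?O" by (rule orbit.step)
      thus "i \<in> ?O" by (simp add: qp)
    next
      assume "i \<in> ?O"
      hence "i \<in> orbit p v0" using Op by simp
      hence "p i \<in> orbit p v0" by (rule orbit.step)
      thus "p i \<in> ?O" using Op by simp
    qed
  qed
  moreover have "(\<forall>i. (p i \<in> ?O) = (i \<in> ?O)) \<longrightarrow>
      (\<lambda>i. i \<in> ?O) = (\<lambda>_. False) \<or> (\<lambda>i. i \<in> ?O) = (\<lambda>_. True)"
    using cp unfolding conn_def by (rule allE)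
  ultimately have "(\<lambda>i. i \<in> ?O) = (\<lambda>_. False) \<or> (\<lambda>i. i \<in> ?O) = (\<lambda>_. True)"
    by (rule rev_mp)
  hence OU: "\<And>i. i \<in> ?O" using v0O by (metis (full_types))
  define m where "m = funpow_dist1 q v0 v0"
  have Ob: "?O = (\<lambda>n. (q ^^ n) v0) ` {0..<m}"
    unfolding m_def by (rule orbit_conv_funpow_dist1[OF v0O])
  have inj: "inj_on (\<lambda>n. (q ^^ n) v0) {0..<m}"
    unfolding m_def by (rule inj_on_funpow_dist1[OF v0O])
  have qm: "(q ^^ m) v0 = v0" unfolding m_def by (rule funpow_dist1_prop[OF v0O])
  have mpos: "0 < m" unfolding m_def by simp
  define vs where "vs = map (\<lambda>k. (q ^^ k) v0) [0..<m]"
  have len: "length vs = m" unfolding vs_def by simp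
  have nth: "k < m \<Longrightarrow> vs ! k = (q ^^ k) v0" for k unfolding vs_def by simp
  have dv: "distinct vs" unfolding vs_def using inj by (simp add: distinct_map)
  have sv: "set vs = UNIV" unfolding vs_def using Ob OU by auto
  have step: "k < m \<Longrightarrow> vs ! (Suc k mod m) = q (vs ! k)" for k
  proof -
    assume k: "k < m"
    have "Suc k mod m < m" using mpos by simp
    hence "vs ! (Suc k mod m) = (q ^^ (Suc k mod m)) v0" by (rule nth)
    also have "\<dots> = (q ^^ Suc k) v0" by (rule funpow_mod_eq[OF qm])
    also have "\<dots> = q (vs ! k)" using nth[OF k] by simp
    finally show ?thesis .
  qed
  have "{(j, i). j = p i} = Rc vs"
  proof (intro set_eqI iffI)
    fix z assume "z \<in> {(j, i). j = p i}"
    then obtain i where z: "z = (p i, i)" by blast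
    have "i \<in> set vs" using sv by simp
    then obtain k0 where k0: "k0 < m" "i = vs ! k0" by (auto simp: in_set_conv_nth len)
    define k where "k = (k0 + m - 1) mod m"
    have km: "k < m" unfolding k_def using mpos by simp
    have "Suc k mod m = k0" unfolding k_def by (rule mod_arith1[OF k0(1)])
    hence "i = q (vs ! k)" using step[OF km] k0(2) by simp
    hence "p i = vs ! k" using pq by simp
    hence "(p i, i) = (vs ! k, vs ! (Suc k mod m))" using \<open>Suc k mod m = k0\<close> k0(2) by simp
    thus "z \<in> Rc vs" unfolding z Rc_def len using km by blast
  next
    fix z assume "z \<in> Rc vs"
    then obtain k where k: "k < m" "z = (vs ! k, vs ! (Suc k mod m))" unfolding Rc_def len by blast
    have "p (vs ! (Suc k mod m)) = vs ! k" using step[OF k(1)] pq by simp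
    thus "z \<in> {(j, i). j = p i}" using k(2) by simp
  qed
  with dv sv show ?thesis unfolding cyc_def by blast
qed

lemma nf_char:
  fixes p :: "'v::finite \<Rightarrow> 'v"
  assumes bp: "bij p"
  shows "(hamiltonian_signed_cycle (interaction_graph (nf p c)) \<and>
            even (card (negative_arcs (interaction_graph (nf p c)))) = b) \<longleftrightarrow>
         range (conjugate (nf p c)) = {x. even (wt x) = b}"
  unfolding range_class[OF bp] ham_nf_iff neg_nf
  using cyc_conn conn_cyc[OF bp] by blast

theorem theorem9:
  fixes f :: "('v::finite \<Rightarrow> bool) \<Rightarrow> ('v \<Rightarrow> bool)"
  shows "(positive_circular f \<longleftrightarrow> even_self_dual f \<and> non_expansive f) \<and>
         (negative_circular f \<longleftrightarrow> odd_self_dual f \<and> non_expansive f)"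
proof -
  have gen: "(hamiltonian_signed_cycle (interaction_graph f) \<and>
            even (card (negative_arcs (interaction_graph f))) = b) \<longleftrightarrow>
         (range (conjugate f) = {x. even (wt x) = b} \<and> self_dual f \<and> non_expansive f)" for b
  proof
    assume H: "hamiltonian_signed_cycle (interaction_graph f) \<and>
            even (card (negative_arcs (interaction_graph f))) = b"
    then obtain p c where bp: "bij p" and fe: "f = nf p c" using ham_nf by blast
    show "range (conjugate f) = {x. even (wt x) = b} \<and> self_dual f \<and> non_expansive f"
      using H nf_char[OF bp, of c b] nf_sd[of p c] nf_ne[OF bp, of c] unfolding fe by blast
  next
    assume H: "range (conjugate f) = {x. even (wt x) = b} \<and> self_dual f \<and> non_expansive f"
    hence "\<And>x y. hdist (f x) (f y) = hdist x y" using isometry by blast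
    then obtain p c where bp: "bij p" and fe: "f = nf p c" using iso_nf by blast
    show "hamiltonian_signed_cycle (interaction_graph f) \<and>
            even (card (negative_arcs (interaction_graph f))) = b"
      using H nf_char[OF bp, of c b] unfolding fe by blast
  qed
  have e1: "{x::'v \<Rightarrow> bool. even (wt x)} = {x. even (wt x) = True}" by simp
  have e2: "{x::'v \<Rightarrow> bool. odd (wt x)} = {x. even (wt x) = False}" by simp
  show ?thesis
    unfolding positive_circular_def negative_circular_def even_self_dual_def odd_self_dual_def
      even_map_def odd_map_def e1 e2
    using gen[of True] gen[of False] by auto
qed

end
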